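(* Let $d\geq 1$, let $p\in[1,\infty)\setminus\{2\}$, let $\beta>0$, and let $\bm{Q}_1,\bm{Q}_2$ be $d\times d$ symmetric positive definite matrices. Define $$\bm{Q}(\beta)=\left(1+\frac{1}{\beta}\right)^{1/p}\bm{Q}_1+(1+\beta)^{1/p}\bm{Q}_2 .$$ Then $\mathcal{E}(\bm{0},\bm{Q}(\beta))\supseteq \mathcal{E}(\bm{0},\bm{Q}_1)+_p\mathcal{E}(\bm{0},\bm{Q}_2)$.
   Context: For $\bm{q}\in\mathbb{R}^d$ and a symmetric positive definite $d\times d$ matrix $\bm{Q}$, the ellipsoid is $\mathcal{E}(\bm{q},\bm{Q})=\{\bm{x}\in\mathbb{R}^d:(\bm{x}-\bm{q})^\top\bm{Q}^{-1}(\bm{x}-\bm{q})\leq 1\}$. The support function of a compact convex set $\mathcal{K}\subset\mathbb{R}^d$ is $h_{\mathcal{K}}(\bm{y})=\sup\{\langle\bm{x},\bm{y}\rangle:\bm{x}\in\mathcal{K}\}$, $\bm{y}\in\mathbb{R}^d$; it determines $\mathcal{K}$ uniquely. For compact convex sets $\mathcal{K}_1,\mathcal{K}_2\subset\mathbb{R}^d$ and $1\le p<\infty$, the (Firey) $p$-sum $\mathcal{K}_1+_p\mathcal{K}_2$ is the compact convex set whose support function is $h(\bm{y})=\left(h_{\mathcal{K}_1}^p(\bm{y})+h_{\mathcal{K}_2}^p(\bm{y})\right)^{1/p}$. (For $\mathcal{E}(\bm{0},\bm{Q})$ one has $h(\bm{y})=\sqrt{\bm{y}^\top\bm{Q}\bm{y}}\ge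 0$.) *)

theory Defs
  imports "HOL-Analysis.Analysis"
begin

definition sym_pos_def_mat :: "real^'n^'n \<Rightarrow> bool" where
  "sym_pos_def_mat Q \<longleftrightarrow> transpose Q = Q \<and> (\<forall>x. x \<noteq> 0 \<longrightarrow> x \<bullet> (Q *v x) > 0)"

definition ellipsoid :: "real^'n \<Rightarrow> real^'n^'n \<Rightarrow> (real^'n) set" where
  "ellipsoid q Q = {x. (x - q) \<bullet> (matrix_inv Q *v (x - q)) \<le> 1}"

definition support_fun :: "(real^'n) set \<Rightarrow> real^'n \<Rightarrow> real" where
  "support_fun K y = (SUP x\<in>K. x \<bullet> y)"

text \<open>Firey p-sum: the (compact convex) set whose support function is
  (h_K1^p + h_K2^p)^(1/p), realised as the intersection of the half-spaces
  {x. <x,y> <= h(y)} (Wulff shape of h).\<close>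
definition firey_sum :: "real \<Rightarrow> (real^'n) set \<Rightarrow> (real^'n) set \<Rightarrow> (real^'n) set" where
  "firey_sum p K1 K2 = {x. \<forall>y. x \<bullet> y \<le>
      (support_fun K1 y powr p + support_fun K2 y powr p) powr (1/p)}"

end

theory Submission
  imports Defs
begin

lemma conv_step:
  fixes u v w s :: real
  assumes s: "1 \<le> s" and u: "0 \<le> u" and v: "0 \<le> v" and w: "0 < w" "w < 1"
  shows "(u + v) powr s \<le> w powr (1 - s) * u powr s + (1 - w) powr (1 - s) * v powr s"
proof -
  have "w powr 0 \<le> w powr (1 - s)" "(1-w) powr 0 \<le> (1-w) powr (1 - s)"
    using s w by (intro powr_mono'; simp)+
  hence g1: "1 \<le> w powr (1 - s)" "1 \<le> (1-w) powr (1 - s)" using w by auto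
  show ?thesis
  proof (cases "u = 0 \<or> v = 0")
    case True
    then show ?thesis
    proof
      assume "u = 0" then show ?thesis using g1 v
        by (simp add: mult_le_cancel_right1)
    next
      assume "v = 0" then show ?thesis using g1 u
        by (simp add: mult_le_cancel_right1)
    qed
  next
    case False
    hence up: "u > 0" "v > 0" using u v by auto
    have "(w * (u/w) + (1-w) * (v/(1-w))) powr s \<le> w * (u/w) powr s + (1-w) * (v/(1-w)) powr s"
      using convex_onD[OF powr_convex[OF s], of "1-w" "u/w" "v/(1-w)"] up w by auto
    moreover have "w * (u/w) + (1-w) * (v/(1-w)) = u + v" using w by simp
    moreover have "w * (u/w) powr s = w powr (1 - s) * u powr s"
      using w up by (simp add: powr_divide powr_diff)
    moreover have "(1-w) * (v/(1-w)) powr s = (1-w) powr (1 - s) * v powr s"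
      using w up by (simp add: powr_divide powr_diff)
    ultimately show ?thesis by simp
  qed
qed

lemma subadd_step:
  fixes u v s :: real
  assumes s: "0 < s" "s \<le> 1" and u: "0 \<le> u" and v: "0 \<le> v"
  shows "(u + v) powr s \<le> u powr s + v powr s"
proof (cases "u + v = 0")
  case True then show ?thesis using u v by simp
next
  case False
  hence t: "u + v > 0" using u v by simp
  have k: "t \<le> t powr s" if "0 \<le> t" "t \<le> 1" for t :: real
  proof (cases "t = 0")
    case True then show ?thesis by simp
  next
    case False
    then have "t powr 1 \<le> t powr s" using that s by (intro powr_mono') auto
    then show ?thesis using that False by simp
  qed
  have "u powr s = (u+v) powr s * (u/(u+v)) powr s" using t u by (simp add: powr_divide)
  moreover have "v powr s = (u+v) powr s * (v/(u+v)) powr s" using t v by (simp add: powr_divide)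
  moreover have "u/(u+v) \<le> (u/(u+v)) powr s" using k u v t by simp
  moreover have "v/(u+v) \<le> (v/(u+v)) powr s" using k u v t by simp
  moreover have "(u+v) powr s = (u+v) powr s * (u/(u+v)) + (u+v) powr s * (v/(u+v))"
    using t by (simp add: distrib_left[symmetric] add_divide_distrib[symmetric])
  ultimately show ?thesis
    by (smt (verit, best) mult_left_mono powr_ge_zero)
qed

lemma scalar_ineq:
  fixes a b p \<beta> :: real
  assumes a: "0 \<le> a" and b: "0 \<le> b" and p: "1 \<le> p" and be: "0 < \<beta>"
  shows "(a powr p + b powr p) powr (1/p) \<le>
     sqrt ((1 + 1/\<beta>) powr (1/p) * a^2 + (1 + \<beta>) powr (1/p) * b^2)"
proof -
  define u where "u = a powr p"
  define v where "v = b powr p"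
  define s where "s = 2/p"
  define w where "w = \<beta>/(1+\<beta>)"
  have u: "0 \<le> u" and v: "0 \<le> v" unfolding u_def v_def by auto
  have w: "0 < w" "w < 1" unfolding w_def using be by auto
  have sp: "0 < s" "s \<le> 2" unfolding s_def using p by (auto simp: field_simps)
  have ua: "u powr s = a^2" unfolding u_def s_def using a p
    by (simp add: powr_powr powr_numeral)
  have vb: "v powr s = b^2" unfolding v_def s_def using b p
    by (simp add: powr_powr powr_numeral)
  have c1: "(1 + 1/\<beta>) powr (1/p) = w powr (-1/p)"
  proof -
    have "1 + 1/\<beta> = inverse w" unfolding w_def using be by (simp add: field_simps)
    thus ?thesis using w by (simp only: inverse_powr) (simp add: powr_minus[symmetric])
  qed
  have c2: "(1 + \<beta>) powr (1/p) = (1-w) powr (-1/p)"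
  proof -
    have "1 + \<beta> = inverse (1-w)" unfolding w_def using be by (simp add: field_simps)
    thus ?thesis using w by (simp only: inverse_powr) (simp add: powr_minus[symmetric])
  qed
  have cge: "1 \<le> w powr (-1/p)" "1 \<le> (1-w) powr (-1/p)"
  proof -
    have "w powr 0 \<le> w powr (-1/p)" "(1-w) powr 0 \<le> (1-w) powr (-1/p)"
      using p w by (intro powr_mono'; simp)+
    thus "1 \<le> w powr (-1/p)" "1 \<le> (1-w) powr (-1/p)" using w by auto
  qed
  have key: "(u + v) powr s \<le> w powr (-1/p) * u powr s + (1-w) powr (-1/p) * v powr s"
  proof (cases "1 \<le> s")
    case True
    have e: "w powr (1 - s) \<le> w powr (-1/p)" "(1-w) powr (1 - s) \<le> (1-w) powr (-1/p)"
    proof -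
      have "1/p \<le> 1" using p by simp
      moreover have "2/p = 2*(1/p)" "-1/p = -(1/p)" by simp_all
      ultimately have "-1/p \<le> 1 - s" unfolding s_def by linarith
      thus "w powr (1 - s) \<le> w powr (-1/p)" "(1-w) powr (1 - s) \<le> (1-w) powr (-1/p)"
        using w by (intro powr_mono'; simp)+
    qed
    have "(u + v) powr s \<le> w powr (1 - s) * u powr s + (1 - w) powr (1 - s) * v powr s"
      by (rule conv_step[OF True u v w])
    also have "\<dots> \<le> w powr (-1/p) * u powr s + (1-w) powr (-1/p) * v powr s"
      using e by (intro add_mono mult_right_mono) auto
    finally show ?thesis .
  next
    case False
    have "(u + v) powr s \<le> u powr s + v powr s"
      using subadd_step[OF sp(1) _ u v] False by simp
    also have "\<dots> \<le> w powr (-1/p) * u powr s + (1-w) powr (-1/p) * v powr s"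
      using mult_right_mono[OF cge(1), of "u powr s"] mult_right_mono[OF cge(2), of "v powr s"] by simp
    finally show ?thesis .
  qed
  have lhs: "(a powr p + b powr p) powr (1/p) = sqrt ((u + v) powr s)"
  proof -
    have "s/2 = 1/p" unfolding s_def by simp
    thus ?thesis using powr_half_sqrt_powr[of "u+v" s] u v unfolding u_def v_def by simp
  qed
  show ?thesis unfolding lhs c1 c2 ua[symmetric] vb[symmetric]
    by (rule real_sqrt_le_mono[OF key])
qed


lemma sym_dot:
  fixes Q :: "real^'n^'n"
  assumes "transpose Q = Q"
  shows "(Q *v a) \<bullet> b = a \<bullet> (Q *v b)"
proof -
  have "Q *v a = a v* Q" using vector_transpose_matrix[of a Q] assms by simp
  thus ?thesis by (simp add: dot_lmul_matrix)
qed

lemma spd_inv: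
  fixes Q :: "real^'n^'n"
  assumes "sym_pos_def_mat Q"
  shows "Q ** matrix_inv Q = mat 1 \<and> matrix_inv Q ** Q = mat 1"
proof -
  have inj: "inj ((*v) Q)"
  proof (rule injI)
    fix x y assume "Q *v x = Q *v y"
    hence "Q *v (x - y) = 0" by (simp add: matrix_vector_mult_diff_distrib)
    hence "(x - y) \<bullet> (Q *v (x - y)) = 0" by simp
    thus "x = y" using assms unfolding sym_pos_def_mat_def by (metis less_irrefl eq_iff_diff_eq_0)
  qed
  then obtain B where "B ** Q = mat 1" using matrix_left_invertible_injective by blast
  hence "invertible Q" using invertible_left_inverse by blast
  hence "\<exists>A'. Q ** A' = mat 1 \<and> A' ** Q = mat 1" unfolding invertible_def by blast
  thus ?thesis unfolding matrix_inv_def by (rule someI_ex)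
qed

lemma ell_bound:
  fixes Q :: "real^'n^'n"
  assumes Q: "sym_pos_def_mat Q" and z: "z \<in> ellipsoid 0 Q"
  shows "z \<bullet> y \<le> sqrt (y \<bullet> (Q *v y))"
proof (cases "y = 0")
  case True then show ?thesis by simp
next
  case False
  define P where "P = matrix_inv Q"
  have sym: "transpose Q = Q" using Q unfolding sym_pos_def_mat_def by simp
  have QP: "Q ** P = mat 1" "P ** Q = mat 1" using spd_inv[OF Q] unfolding P_def by auto
  define c where "c = y \<bullet> (Q *v y)"
  have c: "c > 0" using Q False unfolding c_def sym_pos_def_mat_def by simp
  define l where "l = 1 / sqrt c"
  have l: "l > 0" "l * l * c = 1" "l * sqrt c = 1" using c unfolding l_def by (auto simp: field_simps)
  have zP: "z \<bullet> (P *v z) \<le> 1" using z unfolding ellipsoid_def P_def by simp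
  define d where "d = z - l *\<^sub>R (Q *v y)"
  have psd: "0 \<le> d \<bullet> (P *v d)"
  proof -
    have "d = Q *v (P *v d)" by (simp add: matrix_vector_mul_assoc QP)
    hence "d \<bullet> (P *v d) = (Q *v (P *v d)) \<bullet> (P *v d)" by simp
    also have "\<dots> = (P *v d) \<bullet> (Q *v (P *v d))" by (rule sym_dot[OF sym])
    also have "\<dots> \<ge> 0"
      using Q unfolding sym_pos_def_mat_def by (cases "P *v d = 0") (auto intro: less_imp_le)
    finally show ?thesis .
  qed
  have PQy: "P *v (Q *v y) = y" by (simp add: matrix_vector_mul_assoc QP)
  have QyPz: "(Q *v y) \<bullet> (P *v z) = y \<bullet> z"
    using sym_dot[OF sym, of y "P *v z"] by (simp add: matrix_vector_mul_assoc QP)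
  have QyPz': "(P *v z) \<bullet> (Q *v y) = z \<bullet> y" using QyPz by (simp add: inner_commute)
  have "d \<bullet> (P *v d) = z \<bullet> (P *v z) - 2 * l * (z \<bullet> y) + l * l * c"
    unfolding d_def c_def
    by (simp add: matrix_vector_mult_diff_distrib matrix_vector_mult_scaleR PQy QyPz QyPz'
        inner_diff_left inner_diff_right inner_commute algebra_simps)
  hence "2 * l * (z \<bullet> y) \<le> 2" using psd zP l by linarith
  hence "l * (z \<bullet> y) \<le> l * sqrt c" using l by simp
  hence "z \<bullet> y \<le> sqrt c" using mult_le_cancel_left_pos[OF l(1)] by blast
  thus ?thesis unfolding c_def .
qed

lemma psd_gen:
  fixes Q :: "real^'n^'n"
  assumes "sym_pos_def_mat Q"
  shows "0 \<le> v \<bullet> (Q *v v)"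
proof (cases "v = 0")
  case False
  then show ?thesis using assms unfolding sym_pos_def_mat_def by (simp add: less_imp_le)
qed simp

lemma supp_bound:
  fixes Q :: "real^'n^'n"
  assumes Q: "sym_pos_def_mat Q"
  shows "support_fun (ellipsoid 0 Q) y \<le> sqrt (y \<bullet> (Q *v y))"
    and "0 \<le> support_fun (ellipsoid 0 Q) y"
proof -
  have z0: "0 \<in> ellipsoid 0 Q" unfolding ellipsoid_def by simp
  show "support_fun (ellipsoid 0 Q) y \<le> sqrt (y \<bullet> (Q *v y))"
    unfolding support_fun_def using z0 ell_bound[OF Q] by (intro cSUP_least) auto
  have "bdd_above ((\<lambda>x. x \<bullet> y) ` ellipsoid 0 Q)"
    using ell_bound[OF Q] by (intro bdd_aboveI2) auto
  hence "0 \<bullet> y \<le> support_fun (ellipsoid 0 Q) y"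
    unfolding support_fun_def using z0 by (intro cSUP_upper)
  thus "0 \<le> support_fun (ellipsoid 0 Q) y" by simp
qed

theorem theorem1:
  fixes Q1 Q2 :: "real^'n^'n" and p \<beta> :: real
  assumes "1 \<le> p" and "p \<noteq> 2" and "\<beta> > 0"
    and "sym_pos_def_mat Q1" and "sym_pos_def_mat Q2"
  shows "firey_sum p (ellipsoid 0 Q1) (ellipsoid 0 Q2) \<subseteq>
         ellipsoid 0 ((1 + 1/\<beta>) powr (1/p) *\<^sub>R Q1 + (1 + \<beta>) powr (1/p) *\<^sub>R Q2)"
proof
  fix x assume x: "x \<in> firey_sum p (ellipsoid 0 Q1) (ellipsoid 0 Q2)"
  define c1 where "c1 = (1 + 1/\<beta>) powr (1/p)"
  define c2 where "c2 = (1 + \<beta>) powr (1/p)"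
  have "1 + 1/\<beta> > 0" using assms(3) by (simp add: add_pos_pos)
  hence c: "c1 > 0" "c2 > 0" unfolding c1_def c2_def using assms(3) by auto
  define Qb where "Qb = c1 *\<^sub>R Q1 + c2 *\<^sub>R Q2"
  have Qbv: "Qb *v v = c1 *\<^sub>R (Q1 *v v) + c2 *\<^sub>R (Q2 *v v)" for v
    unfolding Qb_def by (simp add: matrix_vector_mult_add_rdistrib scaleR_matrix_vector_assoc)
  have Qbq: "v \<bullet> (Qb *v v) = c1 * (v \<bullet> (Q1 *v v)) + c2 * (v \<bullet> (Q2 *v v))" for v
    unfolding Qbv by (simp add: inner_add_right)
  have spd: "sym_pos_def_mat Qb"
    unfolding sym_pos_def_mat_def
  proof
    show "transpose Qb = Qb"
      using assms(4,5) unfolding Qb_def sym_pos_def_mat_def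
      by (simp add: transpose_def vec_eq_iff)
    show "\<forall>v. v \<noteq> 0 \<longrightarrow> 0 < v \<bullet> (Qb *v v)"
      using assms(4,5) c unfolding Qbq sym_pos_def_mat_def by (simp add: add_pos_pos)
  qed
  define M where "M = matrix_inv Qb"
  have QM: "Qb ** M = mat 1" using spd_inv[OF spd] unfolding M_def by auto
  define y where "y = M *v x"
  have yQy: "y \<bullet> (Qb *v y) = x \<bullet> y"
    unfolding y_def by (simp add: matrix_vector_mul_assoc QM inner_commute)
  define a where "a = sqrt (y \<bullet> (Q1 *v y))"
  define b where "b = sqrt (y \<bullet> (Q2 *v y))"
  have q1: "0 \<le> y \<bullet> (Q1 *v y)" "0 \<le> y \<bullet> (Q2 *v y)"
    using psd_gen[OF assms(4)] psd_gen[OF assms(5)] by auto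
  have ab: "0 \<le> a" "0 \<le> b" unfolding a_def b_def using q1 by auto
  let ?h1 = "support_fun (ellipsoid 0 Q1) y"
  let ?h2 = "support_fun (ellipsoid 0 Q2) y"
  have "x \<bullet> y \<le> (?h1 powr p + ?h2 powr p) powr (1/p)"
    using x unfolding firey_sum_def by blast
  also have "\<dots> \<le> (a powr p + b powr p) powr (1/p)"
  proof -
    have p0: "0 \<le> p" "0 \<le> 1/p" using assms(1) by auto
    have "?h1 powr p \<le> a powr p"
      using supp_bound[OF assms(4), of y] unfolding a_def by (intro powr_mono2[OF p0(1)])
    moreover have "?h2 powr p \<le> b powr p"
      using supp_bound[OF assms(5), of y] unfolding b_def by (intro powr_mono2[OF p0(1)])
    ultimately have le: "?h1 powr p + ?h2 powr p \<le> a powr p + b powr p" by (rule add_mono)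
    have nn: "0 \<le> ?h1 powr p + ?h2 powr p" by simp
    show ?thesis by (rule powr_mono2[OF p0(2) nn le])
  qed
  also have "\<dots> \<le> sqrt (c1 * a^2 + c2 * b^2)"
    unfolding c1_def c2_def by (rule scalar_ineq[OF ab assms(1,3)])
  also have "c1 * a^2 + c2 * b^2 = x \<bullet> y"
    unfolding a_def b_def using q1 by (simp add: yQy[symmetric] Qbq)
  finally have t: "x \<bullet> y \<le> sqrt (x \<bullet> y)" .
  have "x \<bullet> y \<le> 1"
  proof (rule ccontr)
    assume "\<not> x \<bullet> y \<le> 1"
    hence g: "x \<bullet> y > 1" by simp
    have s1: "1 < sqrt (x \<bullet> y)" using g by simp
    have ss: "sqrt (x \<bullet> y) * sqrt (x \<bullet> y) = x \<bullet> y" using g by simp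
    have "sqrt (x \<bullet> y) * 1 < sqrt (x \<bullet> y) * sqrt (x \<bullet> y)"
      using s1 by (intro mult_strict_left_mono) auto
    hence "sqrt (x \<bullet> y) < x \<bullet> y" using ss by simp
    thus False using t by simp
  qed
  thus "x \<in> ellipsoid 0 ((1 + 1/\<beta>) powr (1/p) *\<^sub>R Q1 + (1 + \<beta>) powr (1/p) *\<^sub>R Q2)"
    unfolding ellipsoid_def c1_def[symmetric] c2_def[symmetric] Qb_def[symmetric] M_def[symmetric]
      y_def[symmetric] by (simp add: y_def)
qed

end
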